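(* Let $G=\{G_1,\dots,G_K\}$ be a partition of $[p]$ into nonempty groups, $m=\min_k|G_k|$, and let $\Gamma$ be a $p\times p$ diagonal matrix with $\Gamma_{aa}=\gamma_k$ for all $a\in G_k$, $k=1,\dots,K$. Then for every $B\in\mathcal{C}$, $$\langle\Gamma,B^*-B\rangle\ \ge\ -\frac{\max_k\gamma_k-\min_k\gamma_k}{m}\sum_{j\neq k}|B_{G_jG_k}|_1.$$
   Context: $B_{G_jG_k}=(B_{ab})_{a\in G_j,b\in G_k}$ and $|M|_1$ denotes the sum of the absolute values of the entries of $M$. $\langle M,N\rangle=\mathrm{tr}(M^tN)$. $B^*$ is the $p\times p$ matrix with $B^*_{ab}=1/|G_k|$ if $a,b\in G_k$, and $0$ otherwise. $\mathcal{C}$ is the set of symmetric positive semidefinite $p\times p$ matrices $B$ with $\sum_aB_{ab}=1$ for all $b$, $B_{ab}\ge0$ for all $a,b$, and $\mathrm{tr}(B)=K$. *)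

theory Defs
  imports Complex_Main
begin

text \<open>p x p real matrices are represented as functions nat => nat => real;
  only entries with indices in {..<p} are relevant.  Indices run over 0..p-1.\<close>

definition frob_inner :: "nat \<Rightarrow> (nat \<Rightarrow> nat \<Rightarrow> real) \<Rightarrow> (nat \<Rightarrow> nat \<Rightarrow> real) \<Rightarrow> real" where
  "frob_inner p M N = (\<Sum>a<p. \<Sum>b<p. M a b * N a b)"

definition psd_mat :: "nat \<Rightarrow> (nat \<Rightarrow> nat \<Rightarrow> real) \<Rightarrow> bool" where
  "psd_mat p B \<longleftrightarrow> (\<forall>a<p. \<forall>b<p. B a b = B b a) \<and>
     (\<forall>x :: nat \<Rightarrow> real. 0 \<le> (\<Sum>a<p. \<Sum>b<p. x a * B a b * x b))"

definition C_set :: "nat \<Rightarrow> nat \<Rightarrow> (nat \<Rightarrow> nat \<Rightarrow> real) set" where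
  "C_set p K = {B. psd_mat p B \<and>
     (\<forall>b<p. (\<Sum>a<p. B a b) = 1) \<and>
     (\<forall>a<p. \<forall>b<p. 0 \<le> B a b) \<and>
     (\<Sum>a<p. B a a) = real K}"

definition is_partition :: "nat \<Rightarrow> nat \<Rightarrow> (nat \<Rightarrow> nat set) \<Rightarrow> bool" where
  "is_partition p K G \<longleftrightarrow> (\<forall>k<K. G k \<noteq> {}) \<and>
     (\<forall>j<K. \<forall>k<K. j \<noteq> k \<longrightarrow> G j \<inter> G k = {}) \<and>
     (\<Union>k<K. G k) = {..<p}"

text \<open>B*: entry 1/|G_k| if a, b both lie in G_k, 0 otherwise (groups are disjoint).\<close>
definition Bstar :: "nat \<Rightarrow> (nat \<Rightarrow> nat set) \<Rightarrow> nat \<Rightarrow> nat \<Rightarrow> real" where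
  "Bstar K G a b = (\<Sum>k<K. if a \<in> G k \<and> b \<in> G k then 1 / real (card (G k)) else 0)"

definition block_l1 :: "(nat \<Rightarrow> nat \<Rightarrow> real) \<Rightarrow> nat set \<Rightarrow> nat set \<Rightarrow> real" where
  "block_l1 B S T = (\<Sum>a\<in>S. \<Sum>b\<in>T. \<bar>B a b\<bar>)"

end

theory Submission
  imports Defs
begin

lemma psd_2x2:
  assumes "psd_mat p B" "a < p" "b < p" "a \<noteq> b"
  shows "2 * B a b \<le> B a a + B b b"
proof -
  define x :: "nat \<Rightarrow> real" where "x = (\<lambda>i. if i = a then 1 else if i = b then -1 else 0)"
  have sym: "B a b = B b a" using assms unfolding psd_mat_def by auto
  have inner: "\<And>i. (\<Sum>j<p. B i j * x j) = B i a - B i b"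
  proof -
    fix i
    have "(\<Sum>j<p. B i j * x j) = (\<Sum>j\<in>{a,b}. B i j * x j)"
      by (rule sum.mono_neutral_right) (auto simp: x_def assms)
    then show "(\<Sum>j<p. B i j * x j) = B i a - B i b" using assms by (simp add: x_def)
  qed
  have "0 \<le> (\<Sum>i<p. \<Sum>j<p. x i * B i j * x j)" using assms(1) unfolding psd_mat_def by blast
  also have "(\<Sum>i<p. \<Sum>j<p. x i * B i j * x j) = (\<Sum>i<p. x i * (\<Sum>j<p. B i j * x j))"
    by (simp add: sum_distrib_left mult.assoc)
  also have "\<dots> = (\<Sum>i<p. x i * (B i a - B i b))" by (simp add: inner)
  also have "\<dots> = (\<Sum>i\<in>{a,b}. x i * (B i a - B i b))"
    by (rule sum.mono_neutral_right) (auto simp: x_def assms)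
  also have "\<dots> = B a a + B b b - 2 * B a b" using assms sym by (simp add: x_def)
  finally show ?thesis by simp
qed

theorem mainTheorem6:
  fixes p K :: nat and G :: "nat \<Rightarrow> nat set" and \<gamma> :: "nat \<Rightarrow> real"
    and \<Gamma> B :: "nat \<Rightarrow> nat \<Rightarrow> real"
  assumes part: "is_partition p K G"
    and Gamma_diag: "\<forall>a<p. \<forall>b<p. a \<noteq> b \<longrightarrow> \<Gamma> a b = 0"
    and Gamma_grp: "\<forall>k<K. \<forall>a\<in>G k. \<Gamma> a a = \<gamma> k"
    and B: "B \<in> C_set p K"
  shows "frob_inner p \<Gamma> (\<lambda>a b. Bstar K G a b - B a b) \<ge>
     - ((Max (\<gamma> ` {..<K}) - Min (\<gamma> ` {..<K})) / real (Min ((\<lambda>k. card (G k)) ` {..<K})))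
       * (\<Sum>j<K. \<Sum>k<K. if j \<noteq> k then block_l1 B (G j) (G k) else 0)"
proof (cases "K = 0")
  case True
  then have "p = 0" using part unfolding is_partition_def by auto
  then show ?thesis using True by (simp add: frob_inner_def)
next
  case False
  have ne: "\<And>k. k < K \<Longrightarrow> G k \<noteq> {}" and disj: "\<And>j k. j < K \<Longrightarrow> k < K \<Longrightarrow> j \<noteq> k \<Longrightarrow> G j \<inter> G k = {}"
    and un: "(\<Union>k<K. G k) = {..<p}" using part unfolding is_partition_def by auto
  have sub: "\<And>k. k < K \<Longrightarrow> G k \<subseteq> {..<p}" using un by blast
  have fin: "\<And>k. k < K \<Longrightarrow> finite (G k)" using sub finite_subset by blast
  have npos: "\<And>k. k < K \<Longrightarrow> card (G k) > 0" using fin ne by (simp add: card_gt_0_iff)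
  have psd: "psd_mat p B" and colsum: "\<And>b. b < p \<Longrightarrow> (\<Sum>a<p. B a b) = 1"
    and nonneg: "\<And>a b. a < p \<Longrightarrow> b < p \<Longrightarrow> 0 \<le> B a b" and tr: "(\<Sum>a<p. B a a) = real K"
    using B unfolding C_set_def by auto
  have sym: "\<And>a b. a < p \<Longrightarrow> b < p \<Longrightarrow> B a b = B b a" using psd unfolding psd_mat_def by auto
  have rowsum: "\<And>a. a < p \<Longrightarrow> (\<Sum>b<p. B a b) = 1"
  proof -
    fix a assume a: "a < p"
    have "(\<Sum>b<p. B a b) = (\<Sum>b<p. B b a)" using a sym by (intro sum.cong) auto
    then show "(\<Sum>b<p. B a b) = 1" using colsum a by simp
  qed
  have split: "\<And>f :: nat \<Rightarrow> real. (\<Sum>a<p. f a) = (\<Sum>k<K. \<Sum>a\<in>G k. f a)"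
  proof -
    fix f :: "nat \<Rightarrow> real"
    have "(\<Sum>a<p. f a) = sum f (\<Union>k<K. G k)" using un by simp
    also have "\<dots> = (\<Sum>k<K. sum f (G k))"
      by (rule sum.UNION_disjoint) (auto simp: fin dest: disj)
    finally show "(\<Sum>a<p. f a) = (\<Sum>k<K. \<Sum>a\<in>G k. f a)" .
  qed
  define tr where "tr k = (\<Sum>a\<in>G k. B a a)" for k
  define d where "d k = 1 - tr k" for k
  define off where "off j = (\<Sum>k<K. if j \<noteq> k then block_l1 B (G j) (G k) else 0)" for j
  define gmax where "gmax = Max (\<gamma> ` {..<K})"
  define gmin where "gmin = Min (\<gamma> ` {..<K})"
  define m where "m = Min ((\<lambda>k. card (G k)) ` {..<K})"
  have mpos: "m > 0" unfolding m_def using False npos by (subst Min_gr_iff) auto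
  have mle: "\<And>k. k < K \<Longrightarrow> m \<le> card (G k)" unfolding m_def by (intro Min_le) auto
  have gle: "\<And>k. k < K \<Longrightarrow> \<gamma> k \<le> gmax" unfolding gmax_def by (intro Max_ge) auto
  have gge: "\<And>k. k < K \<Longrightarrow> gmin \<le> \<gamma> k" unfolding gmin_def by (intro Min_le) auto
  have memk: "\<And>k a. k < K \<Longrightarrow> a \<in> G k \<Longrightarrow> Bstar K G a a = 1 / real (card (G k))"
  proof -
    fix k a assume k: "k < K" and a: "a \<in> G k"
    have "Bstar K G a a = (\<Sum>k'\<in>{k}. if a \<in> G k' \<and> a \<in> G k' then 1 / real (card (G k')) else 0)"
      unfolding Bstar_def
      by (rule sum.mono_neutral_right) (use k a disj in auto)
    then show "Bstar K G a a = 1 / real (card (G k))" using a by simp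
  qed
  have lhs: "frob_inner p \<Gamma> (\<lambda>a b. Bstar K G a b - B a b) = (\<Sum>k<K. \<gamma> k * d k)"
  proof -
    have "frob_inner p \<Gamma> (\<lambda>a b. Bstar K G a b - B a b) = (\<Sum>a<p. \<Gamma> a a * (Bstar K G a a - B a a))"
      unfolding frob_inner_def
    proof (rule sum.cong[OF refl])
      fix a assume a: "a \<in> {..<p}"
      show "(\<Sum>b<p. \<Gamma> a b * (Bstar K G a b - B a b)) = \<Gamma> a a * (Bstar K G a a - B a a)"
        by (rule sum.mono_neutral_right[where S="{a}", simplified]) (use a Gamma_diag in auto)
    qed
    also have "\<dots> = (\<Sum>k<K. \<Sum>a\<in>G k. \<Gamma> a a * (Bstar K G a a - B a a))" by (rule split)
    also have "\<dots> = (\<Sum>k<K. \<gamma> k * d k)"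
    proof (rule sum.cong[OF refl])
      fix k assume k: "k \<in> {..<K}"
      have "(\<Sum>a\<in>G k. \<Gamma> a a * (Bstar K G a a - B a a)) = (\<Sum>a\<in>G k. \<gamma> k * (1 / real (card (G k)) - B a a))"
        using k Gamma_grp memk by (intro sum.cong) auto
      also have "\<dots> = \<gamma> k * (real (card (G k)) * (1 / real (card (G k))) - tr k)"
        by (simp add: sum_distrib_left[symmetric] sum_subtractf tr_def)
      also have "\<dots> = \<gamma> k * d k" using npos[of k] k by (simp add: d_def)
      finally show "(\<Sum>a\<in>G k. \<Gamma> a a * (Bstar K G a a - B a a)) = \<gamma> k * d k" .
    qed
    finally show ?thesis .
  qed
  have dsum: "(\<Sum>k<K. d k) = 0"
  proof -
    have "(\<Sum>k<K. tr k) = real K" using tr split unfolding tr_def by simp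
    then show ?thesis by (simp add: d_def sum_subtractf)
  qed
  have dle: "\<And>j. j < K \<Longrightarrow> d j \<le> off j / real m"
  proof -
    fix j assume j: "j < K"
    let ?S = "G j"
    let ?n = "real (card (G j))"
    have "?n = (\<Sum>a\<in>?S. \<Sum>b<p. B a b)" using rowsum sub[OF j] by (subst sum.cong[OF refl, of _ _ "\<lambda>_. 1"]) auto
    also have "\<dots> = (\<Sum>a\<in>?S. \<Sum>k<K. \<Sum>b\<in>G k. B a b)" by (simp add: split)
    also have "\<dots> = (\<Sum>k<K. block_l1 B ?S (G k))"
      unfolding block_l1_def
      apply (subst sum.swap)
      apply (rule sum.cong[OF refl])+
      using sub j nonneg by (metis in_mono lessThan_iff abs_of_nonneg)
    also have "\<dots> = block_l1 B ?S ?S + off j"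
    proof -
      have "(\<Sum>k<K. block_l1 B ?S (G k)) = (\<Sum>k<K. (if j = k then block_l1 B ?S (G k) else 0) + (if j \<noteq> k then block_l1 B (G j) (G k) else 0))"
        by (intro sum.cong) auto
      also have "\<dots> = block_l1 B ?S ?S + off j" using j by (simp add: sum.distrib off_def)
      finally show ?thesis .
    qed
    finally have eq: "?n = block_l1 B ?S ?S + off j" .
    have "block_l1 B ?S ?S = (\<Sum>a\<in>?S. \<Sum>b\<in>?S. B a b)"
      unfolding block_l1_def using sub j nonneg
      by (intro sum.cong refl) (metis in_mono lessThan_iff abs_of_nonneg)
    also have "\<dots> \<le> (\<Sum>a\<in>?S. \<Sum>b\<in>?S. (B a a + B b b) / 2)"
    proof (intro sum_mono)
      fix a b assume a: "a \<in> ?S" and b: "b \<in> ?S"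
      show "B a b \<le> (B a a + B b b) / 2"
        using psd_2x2[OF psd, of a b] sub[OF j] a b by (cases "a = b") force+
    qed
    also have "\<dots> = ?n * tr j"
      by (simp add: sum.distrib add_divide_distrib sum_divide_distrib[symmetric] tr_def
          sum_distrib_left[symmetric] sum.swap[of "\<lambda>a b. B b b"] )
    finally have "?n - off j \<le> ?n * tr j" using eq by linarith
    then have "?n * d j \<le> off j" by (simp add: d_def algebra_simps)
    then have dj: "d j \<le> off j / ?n" using npos[OF j] by (simp add: field_simps)
    have offnn: "0 \<le> off j" unfolding off_def block_l1_def by (auto intro!: sum_nonneg)
    have "off j / ?n \<le> off j / real m" using mle[OF j] mpos offnn
      by (intro divide_left_mono) auto
    then show "d j \<le> off j / real m" using dj by linarith
  qed
  have "(\<Sum>k<K. \<gamma> k * d k) = (\<Sum>k<K. \<gamma> k * d k - gmax * d k)"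
    using dsum by (simp add: sum_subtractf sum_distrib_left[symmetric])
  also have "\<dots> \<ge> (\<Sum>k<K. - ((gmax - gmin) / real m) * off k)"
  proof (rule sum_mono)
    fix k assume k: "k \<in> {..<K}"
    have o: "0 \<le> off k" unfolding off_def block_l1_def by (auto intro!: sum_nonneg)
    have a1: "0 \<le> gmax - \<gamma> k" "gmax - \<gamma> k \<le> gmax - gmin" using gle gge k by auto
    have d1: "d k \<le> off k / real m" using dle k by auto
    have "0 \<le> off k / real m" using o mpos by simp
    have "(gmax - \<gamma> k) * d k \<le> (gmax - gmin) * (off k / real m)"
    proof (cases "d k \<ge> 0")
      case True
      then show ?thesis using a1 d1 by (intro mult_mono) auto
    next
      case False
      then have "(gmax - \<gamma> k) * d k \<le> 0" using a1 by (simp add: mult_nonneg_nonpos)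
      also have "0 \<le> (gmax - gmin) * (off k / real m)" using a1 \<open>0 \<le> off k / real m\<close> by (intro mult_nonneg_nonneg) auto
      finally show ?thesis .
    qed
    then show "- ((gmax - gmin) / real m) * off k \<le> \<gamma> k * d k - gmax * d k"
      by (simp add: algebra_simps)
  qed
  finally show ?thesis using lhs
    by (simp add: gmax_def gmin_def m_def off_def sum_distrib_left)
qed

end
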